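(* Let $G$ be a connected graph. Then $\{\bar{x},\overline{xy}\}\,\Theta^\ast_{S(G)}\,\{\overline{xy},\bar{y}\}$ holds for every edge $\{x,y\}$ of $G$ if and only if $\Theta^\ast_{S(G)}=S(\Theta^\ast_G)$.
   Context: For a connected graph $H$ with shortest-path distance $d_H$, two edges $\{x,y\}$ and $\{u,v\}$ of $H$ are in relation $\Theta_H$ if $d_H(x,u)+d_H(y,v)\neq d_H(x,v)+d_H(y,u)$; $\Theta^\ast_H$ is the transitive closure of $\Theta_H$. The full subdivision $S(G)$ is obtained by subdividing every edge of $G$ exactly once; the vertex of $S(G)$ corresponding to $x\in V(G)$ is $\bar{x}$ and the vertex subdividing $\{x,y\}\in E(G)$ is $\overline{xy}$. $S(\Theta^\ast_G)$ denotes the relation on $E(S(G))$ in which $\{\bar{x},\overline{xy}\}$ and $\{\bar{u},\overline{uv}\}$ are related if and only if $\{x,y\}\,\Theta^\ast_G\,\{u,v\}$ (in particular $\{\bar{x},\overline{xy}\}$ and $\{\overline{xy},\bar{y}\}$ are always related). *)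

theory Defs
  imports Main
begin

definition simple_graph :: "'a set \<Rightarrow> 'a set set \<Rightarrow> bool" where
  "simple_graph V E \<longleftrightarrow> finite V \<and>
     (\<forall>e\<in>E. \<exists>x y. e = {x, y} \<and> x \<noteq> y \<and> x \<in> V \<and> y \<in> V)"

definition adj :: "'a set set \<Rightarrow> 'a \<Rightarrow> 'a \<Rightarrow> bool" where
  "adj E x y \<longleftrightarrow> {x, y} \<in> E \<and> x \<noteq> y"

definition connected_graph :: "'a set \<Rightarrow> 'a set set \<Rightarrow> bool" where
  "connected_graph V E \<longleftrightarrow> simple_graph V E \<and> V \<noteq> {} \<and>
     (\<forall>x\<in>V. \<forall>y\<in>V. (adj E)\<^sup>*\<^sup>* x y)"

definition gdist :: "'a set set \<Rightarrow> 'a \<Rightarrow> 'a \<Rightarrow> nat" where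
  "gdist E x y = (LEAST n. (adj E ^^ n) x y)"

definition Theta :: "'a set set \<Rightarrow> 'a set \<Rightarrow> 'a set \<Rightarrow> bool" where
  "Theta E e f \<longleftrightarrow> e \<in> E \<and> f \<in> E \<and>
     (\<exists>x y u v. e = {x, y} \<and> f = {u, v} \<and>
        gdist E x u + gdist E y v \<noteq> gdist E x v + gdist E y u)"

definition ThetaStar :: "'a set set \<Rightarrow> 'a set \<Rightarrow> 'a set \<Rightarrow> bool" where
  "ThetaStar E = (Theta E)\<^sup>+\<^sup>+"

text \<open>Full subdivision: original vertices \<open>Orig x\<close> (= x bar) and subdivision
  vertices \<open>Sub e\<close> (= xy bar for e = {x,y}).\<close>
datatype 'a svert = Orig 'a | Sub "'a set"

definition subdiv_V :: "'a set \<Rightarrow> 'a set set \<Rightarrow> 'a svert set" where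
  "subdiv_V V E = Orig ` V \<union> Sub ` E"

definition subdiv_E :: "'a set set \<Rightarrow> 'a svert set set" where
  "subdiv_E E = {{Orig x, Sub e} | x e. e \<in> E \<and> x \<in> e}"

definition S_rel :: "'a set set \<Rightarrow> 'a svert set \<Rightarrow> 'a svert set \<Rightarrow> bool" where
  "S_rel E a b \<longleftrightarrow> (\<exists>x e u f. x \<in> e \<and> e \<in> E \<and> u \<in> f \<and> f \<in> E \<and>
      a = {Orig x, Sub e} \<and> b = {Orig u, Sub f} \<and> ThetaStar E e f)"

end

theory Submission
  imports Defs
begin

lemma adj_sym: "adj E x y \<Longrightarrow> adj E y x"
  unfolding adj_def by (auto simp: insert_commute)

lemma walk_sym: "(adj E ^^ n) p q \<Longrightarrow> (adj E ^^ n) q p"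
proof (induction n arbitrary: q)
  case 0 then show ?case by simp
next
  case (Suc n)
  from Suc.prems obtain r where "(adj E ^^ n) p r" "adj E r q" by (auto elim: relpowp_Suc_E)
  then show ?case using Suc.IH adj_sym relpowp_Suc_I2 by metis
qed

lemma gd_le: "(adj E ^^ n) p q \<Longrightarrow> gdist E p q \<le> n"
  unfolding gdist_def by (rule Least_le)

lemma gd_walk: "(adj E)\<^sup>*\<^sup>* p q \<Longrightarrow> (adj E ^^ gdist E p q) p q"
  unfolding gdist_def rtranclp_power by (metis LeastI)

lemma gd_sym: "gdist E p q = gdist E q p"
  unfolding gdist_def by (metis walk_sym)

lemma gd_0[simp]: "gdist E p p = 0"
  using gd_le[where n=0 and p=p and q=p and E=E] by simp

lemma gd_0_iff: "(adj E)\<^sup>*\<^sup>* p q \<Longrightarrow> gdist E p q = 0 \<longleftrightarrow> p = q"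
  using gd_walk[of E p q] by auto

lemma gd_step: "adj E p r \<Longrightarrow> (adj E)\<^sup>*\<^sup>* r q \<Longrightarrow> gdist E p q \<le> gdist E r q + 1"
  using gd_walk[of E r q] gd_le relpowp_Suc_I2 by (metis Suc_eq_plus1)

lemma gd_desc:
  assumes "(adj E)\<^sup>*\<^sup>* p q" "p \<noteq> q"
  shows "\<exists>r. adj E p r \<and> (adj E)\<^sup>*\<^sup>* r q \<and> gdist E p q = gdist E r q + 1"
proof -
  have w: "(adj E ^^ gdist E p q) p q" using gd_walk assms(1) .
  then obtain m where m: "gdist E p q = Suc m" using assms(2)
    by (cases "gdist E p q") auto
  from w m have "(adj E ^^ Suc m) p q" by simp
  then obtain r where r: "adj E p r" "(adj E ^^ m) r q" using relpowp_Suc_D2 by metis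
  have c: "(adj E)\<^sup>*\<^sup>* r q" using r(2) relpowp_imp_rtranclp by metis
  have "gdist E r q \<le> m" using r(2) gd_le by metis
  moreover have "gdist E p q \<le> gdist E r q + 1" using gd_step r(1) c by metis
  ultimately show ?thesis using r(1) c m by auto
qed

lemma gd_adj: "adj E p q \<Longrightarrow> gdist E p q = 1"
proof -
  assume a: "adj E p q"
  hence "(adj E ^^ 1) p q" by (metis relpowp_1)
  hence "gdist E p q \<le> 1" by (rule gd_le)
  moreover have "p \<noteq> q" using a unfolding adj_def by simp
  moreover have "(adj E)\<^sup>*\<^sup>* p q" using a by auto
  ultimately show ?thesis using gd_0_iff by fastforce
qed

lemma Theta_iff:
  assumes "e = {x, y}" "f = {u, v}"
  shows "Theta E e f \<longleftrightarrow> e \<in> E \<and> f \<in> E \<and>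
     gdist E x u + gdist E y v \<noteq> gdist E x v + gdist E y u"
proof
  assume "Theta E e f"
  then obtain x' y' u' v' where h: "e \<in> E" "f \<in> E" "e = {x', y'}" "f = {u', v'}"
    "gdist E x' u' + gdist E y' v' \<noteq> gdist E x' v' + gdist E y' u'"
    unfolding Theta_def by blast
  from h(3,4) assms have "(x' = x \<and> y' = y \<or> x' = y \<and> y' = x) \<and> (u' = u \<and> v' = v \<or> u' = v \<and> v' = u)"
    by (auto simp: doubleton_eq_iff)
  then show "e \<in> E \<and> f \<in> E \<and> gdist E x u + gdist E y v \<noteq> gdist E x v + gdist E y u"
    using h by (auto simp: gd_sym)
next
  assume "e \<in> E \<and> f \<in> E \<and> gdist E x u + gdist E y v \<noteq> gdist E x v + gdist E y u"
  then show "Theta E e f" unfolding Theta_def using assms by blast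
qed

lemma Theta_refl: "e \<in> E \<Longrightarrow> e = {x, y} \<Longrightarrow> x \<noteq> y \<Longrightarrow> Theta E e e"
  by (subst Theta_iff[of e x y e x y]) (auto simp: gd_adj adj_def gd_sym)

lemma Theta_symp:
  assumes "Theta E e f" shows "Theta E f e"
proof -
  obtain x y u v where h: "e = {x, y}" "f = {u, v}" using assms unfolding Theta_def by blast
  show ?thesis using assms Theta_iff[OF h] Theta_iff[OF h(2,1)] by (auto simp: gd_sym)
qed

lemma TS_sym: "ThetaStar E e f \<Longrightarrow> ThetaStar E f e"
  unfolding ThetaStar_def
proof (induction rule: tranclp_induct)
  case (base y) then show ?case using Theta_symp by blast
next
  case (step y z) then show ?case using Theta_symp
    by (meson tranclp.r_into_trancl tranclp_trans)
qed


lemma adjS_OS: "adj (subdiv_E E) (Orig x) (Sub e) \<longleftrightarrow> e \<in> E \<and> x \<in> e"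
  unfolding adj_def subdiv_E_def by (auto simp: doubleton_eq_iff)

lemma adjS_SO: "adj (subdiv_E E) (Sub e) (Orig x) \<longleftrightarrow> e \<in> E \<and> x \<in> e"
  using adjS_OS adj_sym by metis

lemma adjS_OO: "\<not> adj (subdiv_E E) (Orig x) (Orig y)"
  unfolding adj_def subdiv_E_def by (auto simp: doubleton_eq_iff)

lemma adjS_SS: "\<not> adj (subdiv_E E) (Sub e) (Sub f)"
  unfolding adj_def subdiv_E_def by (auto simp: doubleton_eq_iff)

lemma adjS_Sub: "adj (subdiv_E E) (Sub e) r \<Longrightarrow> \<exists>z. r = Orig z \<and> z \<in> e \<and> e \<in> E"
  by (cases r) (auto simp: adjS_SO adjS_SS)

lemma adjS_Orig: "adj (subdiv_E E) (Orig x) r \<Longrightarrow> \<exists>e. r = Sub e \<and> x \<in> e \<and> e \<in> E"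
  by (cases r) (auto simp: adjS_OS adjS_OO)

lemma walkS_double: "(adj E ^^ n) x u \<Longrightarrow> (adj (subdiv_E E) ^^ (2*n)) (Orig x) (Orig u)"
proof (induction n arbitrary: x)
  case 0 then show ?case by simp
next
  case (Suc n)
  then obtain r where r: "adj E x r" "(adj E ^^ n) r u" using relpowp_Suc_D2 by metis
  have "{x, r} \<in> E" "x \<noteq> r" using r(1) unfolding adj_def by auto
  hence "adj (subdiv_E E) (Orig x) (Sub {x,r})" "adj (subdiv_E E) (Sub {x,r}) (Orig r)"
    by (auto simp: adjS_OS adjS_SO)
  then have "(adj (subdiv_E E) ^^ Suc (Suc (2*n))) (Orig x) (Orig u)"
    using Suc.IH[OF r(2)] relpowp_Suc_I2 by metis
  then show ?case by simp
qed

lemma arithA: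
  fixes a b c g :: nat
  assumes "a \<le> b+1" "b \<le> a+1" "c \<le> g+1" "g \<le> c+1" "a \<le> c+1" "c \<le> a+1" "b \<le> g+1" "g \<le> b+1"
    "a + g = c + b"
  shows "2*a + (2 + 2 * min (min a c) (min b g)) = (1 + 2 * min a c) + (1 + 2 * min a b)"
  using assms by (simp add: min_def split: if_splits)

lemma arithB:
  fixes a b c g :: nat
  assumes "a \<le> b+1" "b \<le> a+1" "c \<le> g+1" "g \<le> c+1" "a \<le> c+1" "c \<le> a+1" "b \<le> g+1" "g \<le> b+1"
    "a + g \<noteq> c + b"
  shows "2*a + (2 + 2 * min (min a c) (min b g)) \<noteq> (1 + 2 * min a c) + (1 + 2 * min a b) \<or>
   2*c + (2 + 2 * min (min a c) (min b g)) \<noteq> (1 + 2 * min a c) + (1 + 2 * min c g) \<or>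
   2*b + (2 + 2 * min (min a c) (min b g)) \<noteq> (1 + 2 * min b g) + (1 + 2 * min a b) \<or>
   2*g + (2 + 2 * min (min a c) (min b g)) \<noteq> (1 + 2 * min b g) + (1 + 2 * min c g)"
  using assms by (simp add: min_def split: if_splits)

context
  fixes V :: "'a set" and E :: "'a set set"
  assumes cg: "connected_graph V E"
begin

lemma edge_ex: "e \<in> E \<Longrightarrow> \<exists>a b. e = {a, b} \<and> a \<noteq> b \<and> a \<in> V \<and> b \<in> V"
  using cg unfolding connected_graph_def simple_graph_def by blast

lemma edge_other: "e \<in> E \<Longrightarrow> x \<in> e \<Longrightarrow> \<exists>y. e = {x, y} \<and> x \<noteq> y \<and> x \<in> V \<and> y \<in> V"
  using edge_ex by blast

lemma connG: "x \<in> V \<Longrightarrow> y \<in> V \<Longrightarrow> (adj E)\<^sup>*\<^sup>* x y"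
  using cg unfolding connected_graph_def by blast

lemma connS_OO: "x \<in> V \<Longrightarrow> y \<in> V \<Longrightarrow> (adj (subdiv_E E))\<^sup>*\<^sup>* (Orig x) (Orig y)"
proof -
  assume a: "x \<in> V" "y \<in> V"
  obtain n where "(adj E ^^ n) x y" using rtranclp_imp_relpowp[OF connG[OF a]] by blast
  then show ?thesis by (rule relpowp_imp_rtranclp[OF walkS_double])
qed

lemma connS: "p \<in> subdiv_V V E \<Longrightarrow> q \<in> subdiv_V V E \<Longrightarrow> (adj (subdiv_E E))\<^sup>*\<^sup>* p q"
proof -
  have o: "\<exists>x\<in>V. (adj (subdiv_E E))\<^sup>*\<^sup>* p (Orig x) \<and> (adj (subdiv_E E))\<^sup>*\<^sup>* (Orig x) p"
    if "p \<in> subdiv_V V E" for p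
  proof (cases p)
    case (Orig x) then show ?thesis using that unfolding subdiv_V_def by auto
  next
    case (Sub e)
    then have "e \<in> E" using that unfolding subdiv_V_def by auto
    then obtain a b where ab: "e = {a, b}" "a \<in> V" using edge_ex by blast
    then have "adj (subdiv_E E) p (Orig a)" "adj (subdiv_E E) (Orig a) p"
      using \<open>e \<in> E\<close> Sub by (auto simp: adjS_OS adjS_SO)
    then show ?thesis using ab by blast
  qed
  assume "p \<in> subdiv_V V E" "q \<in> subdiv_V V E"
  then obtain x y where "x \<in> V" "y \<in> V" "(adj (subdiv_E E))\<^sup>*\<^sup>* p (Orig x)" "(adj (subdiv_E E))\<^sup>*\<^sup>* (Orig y) q"
    using o by blast
  then show ?thesis using connS_OO by (meson rtranclp_trans)
qed

lemma subV_O: "x \<in> V \<Longrightarrow> Orig x \<in> subdiv_V V E"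
  unfolding subdiv_V_def by auto
lemma subV_S: "e \<in> E \<Longrightarrow> Sub e \<in> subdiv_V V E"
  unfolding subdiv_V_def by auto

lemma DSub:
  assumes "e \<in> E" "e = {x, y}" "q \<in> subdiv_V V E" "q \<noteq> Sub e"
  shows "gdist (subdiv_E E) (Sub e) q =
    1 + min (gdist (subdiv_E E) (Orig x) q) (gdist (subdiv_E E) (Orig y) q)"
proof -
  let ?D = "gdist (subdiv_E E)"
  have V: "x \<in> V \<and> y \<in> V"
  proof -
    obtain a b where "e = {a, b}" "a \<in> V" "b \<in> V" using edge_ex[OF assms(1)] by blast
    then show ?thesis using assms(2) by (metis insertCI insertE singletonD)
  qed
  have ax: "adj (subdiv_E E) (Sub e) (Orig x)" "adj (subdiv_E E) (Sub e) (Orig y)"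
    using assms(1,2) by (auto simp: adjS_SO)
  have "?D (Sub e) q \<le> ?D (Orig x) q + 1" "?D (Sub e) q \<le> ?D (Orig y) q + 1"
    using gd_step[OF ax(1)] gd_step[OF ax(2)] connS[OF subV_O assms(3)] V by blast+
  moreover obtain r where r: "adj (subdiv_E E) (Sub e) r" "?D (Sub e) q = ?D r q + 1"
    using gd_desc[OF connS[OF subV_S[OF assms(1)] assms(3)]] assms(4) by blast
  moreover from adjS_Sub[OF r(1)] assms(2) have "r = Orig x \<or> r = Orig y" by auto
  ultimately show ?thesis by auto
qed

lemma DOO:
  assumes "x \<in> V" "u \<in> V"
  shows "gdist (subdiv_E E) (Orig x) (Orig u) = 2 * gdist E x u"
proof -
  let ?D = "gdist (subdiv_E E)"
  have le: "?D (Orig x) (Orig u) \<le> 2 * gdist E x u"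
    using gd_le[OF walkS_double[OF gd_walk[OF connG[OF assms]]]] .
  have ge: "\<And>x. x \<in> V \<Longrightarrow> ?D (Orig x) (Orig u) = n \<Longrightarrow> 2 * gdist E x u \<le> n" for n
  proof (induction n rule: less_induct)
    case (less n x)
    show ?case
    proof (cases "x = u")
      case True then show ?thesis by simp
    next
      case False
      obtain r where r: "adj (subdiv_E E) (Orig x) r" "?D (Orig x) (Orig u) = ?D r (Orig u) + 1"
        using gd_desc[OF connS_OO[OF less.prems(1) assms(2)]] False by blast
      then obtain e where e: "r = Sub e" "x \<in> e" "e \<in> E" using adjS_Orig[OF r(1)] by blast
      then obtain y where y: "e = {x, y}" "x \<noteq> y" "y \<in> V" using edge_other[OF e(3,2)] by blast
      have "?D (Sub e) (Orig u) = 1 + min (?D (Orig x) (Orig u)) (?D (Orig y) (Orig u))"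
        using DSub[OF e(3) y(1) subV_O[OF assms(2)]] by simp
      hence d: "?D (Orig y) (Orig u) + 2 = n" using r(2) e(1) less.prems(2) by auto
      have "2 * gdist E y u \<le> ?D (Orig y) (Orig u)"
        using less.IH[of "?D (Orig y) (Orig u)" y] d y(3) by auto
      moreover have "adj E x y" using e y unfolding adj_def by auto
      hence "gdist E x u \<le> gdist E y u + 1" using gd_step connG y(3) assms(2) by metis
      ultimately show ?thesis using d by linarith
    qed
  qed
  show ?thesis using le ge[OF assms(1) refl] by linarith
qed


lemma DOS:
  assumes "x \<in> V" "f \<in> E" "f = {u, v}"
  shows "gdist (subdiv_E E) (Orig x) (Sub f) = 1 + 2 * min (gdist E x u) (gdist E x v)"
proof -
  have V: "u \<in> V \<and> v \<in> V"
  proof -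
    obtain a b where "f = {a, b}" "a \<in> V" "b \<in> V" using edge_ex[OF assms(2)] by blast
    then show ?thesis using assms(3) by (metis insertCI insertE singletonD)
  qed
  have "gdist (subdiv_E E) (Sub f) (Orig x) =
    1 + min (gdist (subdiv_E E) (Orig u) (Orig x)) (gdist (subdiv_E E) (Orig v) (Orig x))"
    by (rule DSub[OF assms(2,3) subV_O[OF assms(1)]]) simp
  then show ?thesis using DOO V assms(1) by (simp add: gd_sym[of "subdiv_E E"] gd_sym[of E _ x])
qed

lemma DSS:
  assumes "e \<in> E" "e = {x, y}" "f \<in> E" "f = {u, v}" "e \<noteq> f"
  shows "gdist (subdiv_E E) (Sub e) (Sub f) = 2 + 2 * min (min (gdist E x u) (gdist E x v))
     (min (gdist E y u) (gdist E y v))"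
proof -
  have V: "x \<in> V \<and> y \<in> V"
  proof -
    obtain a b where "e = {a, b}" "a \<in> V" "b \<in> V" using edge_ex[OF assms(1)] by blast
    then show ?thesis using assms(2) by (metis insertCI insertE singletonD)
  qed
  have "gdist (subdiv_E E) (Sub e) (Sub f) =
    1 + min (gdist (subdiv_E E) (Orig x) (Sub f)) (gdist (subdiv_E E) (Orig y) (Sub f))"
    using DSub[OF assms(1,2) subV_S[OF assms(3)]] assms(5) by simp
  then show ?thesis using DOS[OF _ assms(3,4)] V by simp
qed

lemma Lip: "adj E x y \<Longrightarrow> y \<in> V \<Longrightarrow> u \<in> V \<Longrightarrow> gdist E x u \<le> gdist E y u + 1"
  using gd_step connG by metis

end


context
  fixes V :: "'a set" and E :: "'a set set"
  assumes cg: "connected_graph V E"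
begin

lemma Lip8:
  assumes "e = {x, y}" "e \<in> E" "x \<noteq> y" "f = {u, v}" "f \<in> E" "u \<noteq> v"
    "x \<in> V" "y \<in> V" "u \<in> V" "v \<in> V"
  shows "gdist E x u \<le> gdist E y u + 1" "gdist E y u \<le> gdist E x u + 1"
    "gdist E x v \<le> gdist E y v + 1" "gdist E y v \<le> gdist E x v + 1"
    "gdist E x u \<le> gdist E x v + 1" "gdist E x v \<le> gdist E x u + 1"
    "gdist E y u \<le> gdist E y v + 1" "gdist E y v \<le> gdist E y u + 1"
proof -
  have a1: "adj E x y" "adj E y x" using assms unfolding adj_def by (auto simp: insert_commute)
  have a2: "adj E u v" "adj E v u" using assms unfolding adj_def by (auto simp: insert_commute)
  show "gdist E x u \<le> gdist E y u + 1" "gdist E y u \<le> gdist E x u + 1"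
    "gdist E x v \<le> gdist E y v + 1" "gdist E y v \<le> gdist E x v + 1"
    using Lip[OF cg] a1 assms by blast+
  show "gdist E x u \<le> gdist E x v + 1" "gdist E x v \<le> gdist E x u + 1"
    "gdist E y u \<le> gdist E y v + 1" "gdist E y v \<le> gdist E y u + 1"
    using Lip[OF cg a2(1) assms(10)] Lip[OF cg a2(2) assms(9)] assms(7,8)
    by (simp_all add: gd_sym[of E _ u] gd_sym[of E _ v])
qed

lemma DSO:
  assumes "x \<in> V" "f \<in> E" "f = {u, v}"
  shows "gdist (subdiv_E E) (Sub f) (Orig x) = 1 + 2 * min (gdist E u x) (gdist E v x)"
  using DOS[OF cg assms] by (simp add: gd_sym[of "subdiv_E E" _ "Orig x"] gd_sym[of E x])

lemma ThetaS_imp_S: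
  assumes "Theta (subdiv_E E) a b" shows "S_rel E a b"
proof -
  have "a \<in> subdiv_E E" "b \<in> subdiv_E E" using assms Theta_def by auto
  then obtain x e u f where h: "a = {Orig x, Sub e}" "e \<in> E" "x \<in> e"
    "b = {Orig u, Sub f}" "f \<in> E" "u \<in> f" unfolding subdiv_E_def by blast
  have cS: "gdist (subdiv_E E) (Orig x) (Orig u) + gdist (subdiv_E E) (Sub e) (Sub f) \<noteq>
     gdist (subdiv_E E) (Orig x) (Sub f) + gdist (subdiv_E E) (Sub e) (Orig u)"
    using Theta_iff[OF h(1) h(4)] assms by simp
  have "ThetaStar E e f"
  proof (cases "e = f")
    case True
    obtain y where "e = {x, y}" "x \<noteq> y" using edge_other[OF cg h(2,3)] by blast
    then have "Theta E e e" by (rule Theta_refl[OF h(2)])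
    then show ?thesis using True unfolding ThetaStar_def by (simp add: tranclp.r_into_trancl)
  next
    case False
    obtain y where y: "e = {x, y}" "x \<noteq> y" "x \<in> V" "y \<in> V" using edge_other[OF cg h(2,3)] by blast
    obtain v where v: "f = {u, v}" "u \<noteq> v" "u \<in> V" "v \<in> V" using edge_other[OF cg h(5,6)] by blast
    note L = Lip8[OF y(1) h(2) y(2) v(1) h(5) v(2) y(3,4) v(3,4)]
    have cG: "gdist E x u + gdist E y v \<noteq> gdist E x v + gdist E y u"
    proof
      assume eq: "gdist E x u + gdist E y v = gdist E x v + gdist E y u"
      have "2 * gdist E x u + (2 + 2 * min (min (gdist E x u) (gdist E x v)) (min (gdist E y u) (gdist E y v)))
        = (1 + 2 * min (gdist E x u) (gdist E x v)) + (1 + 2 * min (gdist E x u) (gdist E y u))"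
        by (rule arithA[OF L eq])
      moreover have "gdist (subdiv_E E) (Orig x) (Orig u) = 2 * gdist E x u" using DOO[OF cg y(3) v(3)] .
      moreover have "gdist (subdiv_E E) (Sub e) (Sub f) = 2 + 2 * min (min (gdist E x u) (gdist E x v))
        (min (gdist E y u) (gdist E y v))" using DSS[OF cg h(2) y(1) h(5) v(1) False] .
      moreover have "gdist (subdiv_E E) (Orig x) (Sub f) = 1 + 2 * min (gdist E x u) (gdist E x v)"
        using DOS[OF cg y(3) h(5) v(1)] .
      moreover have "gdist (subdiv_E E) (Sub e) (Orig u) = 1 + 2 * min (gdist E x u) (gdist E y u)"
        using DSO[OF v(3) h(2) y(1)] .
      ultimately show False using cS by simp
    qed
    then have "Theta E e f" using Theta_iff[OF y(1) v(1)] h(2,5) by simp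
    then show ?thesis unfolding ThetaStar_def by blast
  qed
  then show ?thesis unfolding S_rel_def using h by blast
qed

lemma half_refl: "e \<in> E \<Longrightarrow> x \<in> e \<Longrightarrow> Theta (subdiv_E E) {Orig x, Sub e} {Orig x, Sub e}"
  by (rule Theta_refl[of _ _ "Orig x" "Sub e"]) (auto simp: subdiv_E_def)

lemma halves:
  assumes H: "\<forall>x y. {x, y} \<in> E \<and> x \<noteq> y \<longrightarrow>
            ThetaStar (subdiv_E E) {Orig x, Sub {x, y}} {Sub {x, y}, Orig y}"
    and "e \<in> E" "x \<in> e" "y \<in> e"
  shows "ThetaStar (subdiv_E E) {Orig x, Sub e} {Orig y, Sub e}"
proof (cases "x = y")
  case True
  have "Theta (subdiv_E E) {Orig x, Sub e} {Orig x, Sub e}" by (rule half_refl[OF assms(2,3)])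
  then show ?thesis using True unfolding ThetaStar_def by (simp add: tranclp.r_into_trancl)
next
  case False
  obtain y' where "e = {x, y'}" "x \<noteq> y'" using edge_other[OF cg assms(2,3)] by blast
  then have e: "e = {x, y}" using False assms(4) by auto
  show ?thesis using H[rule_format, of x y] e assms(2) False by (simp add: insert_commute)
qed

lemma halves_ex:
  assumes "Theta E e f"
  shows "\<exists>p q. p \<in> e \<and> q \<in> f \<and> Theta (subdiv_E E) {Orig p, Sub e} {Orig q, Sub f}"
proof -
  have eE: "e \<in> E" "f \<in> E" using assms Theta_def by auto
  obtain x y where y: "e = {x, y}" "x \<noteq> y" "x \<in> V" "y \<in> V" using edge_ex[OF cg eE(1)] by blast
  obtain u v where v: "f = {u, v}" "u \<noteq> v" "u \<in> V" "v \<in> V" using edge_ex[OF cg eE(2)] by blast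
  show ?thesis
  proof (cases "e = f")
    case True
    then show ?thesis using half_refl[OF eE(1)] y(1) by blast
  next
    case False
    note L = Lip8[OF y(1) eE(1) y(2) v(1) eE(2) v(2) y(3,4) v(3,4)]
    have cG: "gdist E x u + gdist E y v \<noteq> gdist E x v + gdist E y u"
      using Theta_iff[OF y(1) v(1)] assms by simp
    note A = arithB[OF L cG]
    note D = DOO[OF cg y(3) v(3)] DOO[OF cg y(3) v(4)] DOO[OF cg y(4) v(3)] DOO[OF cg y(4) v(4)]
      DSS[OF cg eE(1) y(1) eE(2) v(1) False]
      DOS[OF cg y(3) eE(2) v(1)] DOS[OF cg y(4) eE(2) v(1)]
      DSO[OF v(3) eE(1) y(1)] DSO[OF v(4) eE(1) y(1)]
    have T: "Theta (subdiv_E E) {Orig p, Sub e} {Orig q, Sub f} \<longleftrightarrow>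
      gdist (subdiv_E E) (Orig p) (Orig q) + gdist (subdiv_E E) (Sub e) (Sub f) \<noteq>
      gdist (subdiv_E E) (Orig p) (Sub f) + gdist (subdiv_E E) (Sub e) (Orig q)"
      if "p \<in> e" "q \<in> f" for p q
      using Theta_iff[of "{Orig p, Sub e}" "Orig p" "Sub e" "{Orig q, Sub f}" "Orig q" "Sub f"]
        that eE unfolding subdiv_E_def by blast
    from A show ?thesis
    proof (elim disjE)
      assume c: "2 * gdist E x u + (2 + 2 * min (min (gdist E x u) (gdist E x v)) (min (gdist E y u) (gdist E y v))) \<noteq>
         1 + 2 * min (gdist E x u) (gdist E x v) + (1 + 2 * min (gdist E x u) (gdist E y u))"
      have "Theta (subdiv_E E) {Orig x, Sub e} {Orig u, Sub f}"
        using T[of x u] y(1) v(1) c D by simp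
      then show ?thesis using y(1) v(1) by blast
    next
      assume c: "2 * gdist E x v + (2 + 2 * min (min (gdist E x u) (gdist E x v)) (min (gdist E y u) (gdist E y v))) \<noteq>
         1 + 2 * min (gdist E x u) (gdist E x v) + (1 + 2 * min (gdist E x v) (gdist E y v))"
      have "Theta (subdiv_E E) {Orig x, Sub e} {Orig v, Sub f}"
        using T[of x v] y(1) v(1) c D by simp
      then show ?thesis using y(1) v(1) by blast
    next
      assume c: "2 * gdist E y u + (2 + 2 * min (min (gdist E x u) (gdist E x v)) (min (gdist E y u) (gdist E y v))) \<noteq>
         1 + 2 * min (gdist E y u) (gdist E y v) + (1 + 2 * min (gdist E x u) (gdist E y u))"
      have "Theta (subdiv_E E) {Orig y, Sub e} {Orig u, Sub f}"
        using T[of y u] y(1) v(1) c D by simp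
      then show ?thesis using y(1) v(1) by blast
    next
      assume c: "2 * gdist E y v + (2 + 2 * min (min (gdist E x u) (gdist E x v)) (min (gdist E y u) (gdist E y v))) \<noteq>
         1 + 2 * min (gdist E y u) (gdist E y v) + (1 + 2 * min (gdist E x v) (gdist E y v))"
      have "Theta (subdiv_E E) {Orig y, Sub e} {Orig v, Sub f}"
        using T[of y v] y(1) v(1) c D by simp
      then show ?thesis using y(1) v(1) by blast
    qed
  qed
qed

end


lemma S_rel_trans: "S_rel E a b \<Longrightarrow> S_rel E b c \<Longrightarrow> S_rel E a c"
proof -
  assume 1: "S_rel E a b" and 2: "S_rel E b c"
  from 1 obtain x e u f where h1: "x \<in> e" "e \<in> E" "u \<in> f" "f \<in> E"
    "a = {Orig x, Sub e}" "b = {Orig u, Sub f}" "ThetaStar E e f" unfolding S_rel_def by blast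
  from 2 obtain u' f' w g where h2: "u' \<in> f'" "f' \<in> E" "w \<in> g" "g \<in> E"
    "b = {Orig u', Sub f'}" "c = {Orig w, Sub g}" "ThetaStar E f' g" unfolding S_rel_def by blast
  have "f = f'" using h1(6) h2(5) by (auto simp: doubleton_eq_iff)
  then have "ThetaStar E e g" using h1(7) h2(7) unfolding ThetaStar_def by auto
  then show ?thesis unfolding S_rel_def using h1 h2 by blast
qed

lemma S_sub_TS:
  assumes cg: "connected_graph V E"
    and H: "\<forall>x y. {x, y} \<in> E \<and> x \<noteq> y \<longrightarrow>
            ThetaStar (subdiv_E E) {Orig x, Sub {x, y}} {Sub {x, y}, Orig y}"
    and T: "ThetaStar E e f"
  shows "\<forall>x\<in>e. \<forall>u\<in>f. ThetaStar (subdiv_E E) {Orig x, Sub e} {Orig u, Sub f}"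
proof -
  have B: "ThetaStar (subdiv_E E) {Orig x, Sub e} {Orig u, Sub f}"
    if th: "Theta E e f" "x \<in> e" "u \<in> f" for e f x u
  proof -
    have eE: "e \<in> E" "f \<in> E" using th(1) Theta_def by auto
    obtain p q where pq: "p \<in> e" "q \<in> f" "Theta (subdiv_E E) {Orig p, Sub e} {Orig q, Sub f}"
      using halves_ex[OF cg th(1)] by blast
    have "ThetaStar (subdiv_E E) {Orig x, Sub e} {Orig p, Sub e}"
      by (rule halves[OF cg H eE(1) th(2) pq(1)])
    moreover have "ThetaStar (subdiv_E E) {Orig p, Sub e} {Orig q, Sub f}"
      using pq(3) unfolding ThetaStar_def by (simp add: tranclp.r_into_trancl)
    moreover have "ThetaStar (subdiv_E E) {Orig q, Sub f} {Orig u, Sub f}"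
      by (rule halves[OF cg H eE(2) pq(2) th(3)])
    ultimately show ?thesis unfolding ThetaStar_def by (meson tranclp_trans)
  qed
  from T show ?thesis unfolding ThetaStar_def
  proof (induction rule: tranclp_induct)
    case (base y) then show ?case using B unfolding ThetaStar_def by blast
  next
    case (step y z)
    have "y \<in> E" using step(2) Theta_def by auto
    then obtain w where w: "w \<in> y" using edge_ex[OF cg] by blast
    show ?case
    proof (intro ballI)
      fix x u assume "x \<in> e" "u \<in> z"
      then have "(Theta (subdiv_E E))\<^sup>+\<^sup>+ {Orig x, Sub e} {Orig w, Sub y}"
        "(Theta (subdiv_E E))\<^sup>+\<^sup>+ {Orig w, Sub y} {Orig u, Sub z}"
        using step(3) w B[OF step(2) w] unfolding ThetaStar_def by blast+
      then show "(Theta (subdiv_E E))\<^sup>+\<^sup>+ {Orig x, Sub e} {Orig u, Sub z}"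
        by (meson tranclp_trans)
    qed
  qed
qed

theorem lemma3p5:
  fixes V :: "'a set" and E :: "'a set set"
  assumes "connected_graph V E"
  shows "(\<forall>x y. {x, y} \<in> E \<and> x \<noteq> y \<longrightarrow>
            ThetaStar (subdiv_E E) {Orig x, Sub {x, y}} {Sub {x, y}, Orig y})
         \<longleftrightarrow> ThetaStar (subdiv_E E) = S_rel E"
proof
  assume H: "\<forall>x y. {x, y} \<in> E \<and> x \<noteq> y \<longrightarrow>
            ThetaStar (subdiv_E E) {Orig x, Sub {x, y}} {Sub {x, y}, Orig y}"
  show "ThetaStar (subdiv_E E) = S_rel E"
  proof (intro ext iffI)
    fix a b assume "ThetaStar (subdiv_E E) a b"
    then show "S_rel E a b" unfolding ThetaStar_def
    proof (induction rule: tranclp_induct)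
      case (base y) then show ?case using ThetaS_imp_S[OF assms] by blast
    next
      case (step y z) then show ?case using ThetaS_imp_S[OF assms] S_rel_trans by blast
    qed
  next
    fix a b assume "S_rel E a b"
    then obtain x e u f where h: "x \<in> e" "u \<in> f"
      "a = {Orig x, Sub e}" "b = {Orig u, Sub f}" "ThetaStar E e f" unfolding S_rel_def by blast
    then show "ThetaStar (subdiv_E E) a b" using S_sub_TS[OF assms H h(5)] by blast
  qed
next
  assume eq: "ThetaStar (subdiv_E E) = S_rel E"
  show "\<forall>x y. {x, y} \<in> E \<and> x \<noteq> y \<longrightarrow>
            ThetaStar (subdiv_E E) {Orig x, Sub {x, y}} {Sub {x, y}, Orig y}"
  proof (intro allI impI)
    fix x y assume a: "{x, y} \<in> E \<and> x \<noteq> y"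
    then have "Theta E {x, y} {x, y}" using Theta_refl[of "{x, y}" E x y] by blast
    then have "ThetaStar E {x, y} {x, y}" unfolding ThetaStar_def by (simp add: tranclp.r_into_trancl)
    then have "S_rel E {Orig x, Sub {x, y}} {Orig y, Sub {x, y}}"
      unfolding S_rel_def using a by blast
    then show "ThetaStar (subdiv_E E) {Orig x, Sub {x, y}} {Sub {x, y}, Orig y}"
      using eq by (simp add: insert_commute)
  qed
qed

end
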